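(* Let $D=(V,A)$ be a digraph with minimum in-degree at least 1, and let $\mathcal{L}D=\mathcal{L}_{(A',\phi)}D$ be a partial line digraph of $D$. Then $\mathcal{L}D$ has a nonempty semikernel if and only if $D$ has a nonempty semikernel.
   Context: Digraphs are loopless and without multiple arcs. For $U\subseteq V$, $\omega^-(U)=\{(x,y)\in A: y\in U,\ x\notin U\}$ and $\omega^+(U)=\{(x,y)\in A: x\in U,\ y\notin U\}$; for a vertex $j$, $\omega^-(j)$ is the set of arcs with terminal vertex $j$. For a set of arcs $\Omega$, $H(\Omega)=\{y:(x,y)\in\Omega\}$. The arc $(x,y)$ is also written $xy$. Partial line digraph: given $D=(V,A)$ with minimum in-degree at least 1, take an arc subset $A'\subseteq A$ and a surjective map $\phi:A\to A'$ such that (i) $H(A')=V$; (ii) $\phi$ restricted to $A'$ is the identity, and for every vertex $j\in V$, $\phi(\omega^-(j))\subseteq\omega^-(j)\cap A'$. The partial line digraph $\mathcal{L}_{(A',\phi)}D$ has vertex set $A'$ and arc set $\{(ij,\phi(j,k)) : ij\in A',\ (j,k)\in A\}$. A semikernel of a digraph is an independent vertex set $S$ (no arc joins two vertices of $S$) such that for every arc $(s,x)\in\omega^+(S)$ there is an arc $(x,s')\in\omega^-(S)$. *)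

theory Defs
  imports Main
begin

definition digraph :: "'a set \<Rightarrow> ('a \<times> 'a) set \<Rightarrow> bool" where
  "digraph V A \<longleftrightarrow> finite V \<and> A \<subseteq> V \<times> V \<and> (\<forall>(x,y)\<in>A. x \<noteq> y)"

definition in_arcs :: "('a \<times> 'a) set \<Rightarrow> 'a \<Rightarrow> ('a \<times> 'a) set" where
  "in_arcs A j = {(x,y) \<in> A. y = j}"

definition min_indeg_ge1 :: "'a set \<Rightarrow> ('a \<times> 'a) set \<Rightarrow> bool" where
  "min_indeg_ge1 V A \<longleftrightarrow> (\<forall>j\<in>V. in_arcs A j \<noteq> {})"

definition heads :: "('a \<times> 'a) set \<Rightarrow> 'a set" where
  "heads \<Omega> = {y. \<exists>x. (x,y) \<in> \<Omega>}"

definition pld_data :: "'a set \<Rightarrow> ('a \<times> 'a) set \<Rightarrow> ('a \<times> 'a) set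
    \<Rightarrow> (('a \<times> 'a) \<Rightarrow> ('a \<times> 'a)) \<Rightarrow> bool" where
  "pld_data V A A' \<phi> \<longleftrightarrow>
     A' \<subseteq> A \<and> \<phi> ` A = A' \<and> heads A' = V \<and>
     (\<forall>a\<in>A'. \<phi> a = a) \<and>
     (\<forall>j\<in>V. \<phi> ` in_arcs A j \<subseteq> in_arcs A j \<inter> A')"

text \<open>Arc set of the partial line digraph (its vertex set is A').\<close>
definition pld_arcs :: "('a \<times> 'a) set \<Rightarrow> ('a \<times> 'a) set
    \<Rightarrow> (('a \<times> 'a) \<Rightarrow> ('a \<times> 'a)) \<Rightarrow> (('a \<times> 'a) \<times> ('a \<times> 'a)) set" where
  "pld_arcs A A' \<phi> = {((i,j), \<phi> (j',k)) | i j j' k. (i,j) \<in> A' \<and> (j',k) \<in> A \<and> j' = j}"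

definition semikernel :: "'b set \<Rightarrow> ('b \<times> 'b) set \<Rightarrow> 'b set \<Rightarrow> bool" where
  "semikernel V A S \<longleftrightarrow> S \<subseteq> V \<and>
     (\<forall>x\<in>S. \<forall>y\<in>S. (x,y) \<notin> A) \<and>
     (\<forall>s x. (s,x) \<in> A \<and> s \<in> S \<and> x \<notin> S \<longrightarrow> (\<exists>s'\<in>S. (x,s') \<in> A))"

end

theory Submission
  imports Defs
begin

lemma pld_arcs_iff:
  "(p,b) \<in> pld_arcs A A' \<phi> \<longleftrightarrow> p \<in> A' \<and> (\<exists>k. (snd p,k)\<in>A \<and> b = \<phi>(snd p,k))"
  unfolding pld_arcs_def by (cases p) auto

lemma phi_prop:
  assumes "digraph V A" "pld_data V A A' \<phi>" "(j,k) \<in> A"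
  shows "\<phi>(j,k) \<in> A' \<and> snd (\<phi>(j,k)) = k"
proof -
  have "k \<in> V" using assms unfolding digraph_def by auto
  then have "\<phi> ` in_arcs A k \<subseteq> in_arcs A k \<inter> A'" using assms(2) unfolding pld_data_def by blast
  moreover have "(j,k) \<in> in_arcs A k" using assms(3) unfolding in_arcs_def by auto
  ultimately have "\<phi>(j,k) \<in> in_arcs A k \<inter> A'" by blast
  then show ?thesis unfolding in_arcs_def by auto
qed

theorem theorem2p7:
  fixes V :: "'a set" and A A' :: "('a \<times> 'a) set" and \<phi> :: "('a \<times> 'a) \<Rightarrow> ('a \<times> 'a)"
  assumes "digraph V A" and "min_indeg_ge1 V A" and "pld_data V A A' \<phi>"
  shows "(\<exists>S. S \<noteq> {} \<and> semikernel A' (pld_arcs A A' \<phi>) S)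
         \<longleftrightarrow> (\<exists>S. S \<noteq> {} \<and> semikernel V A S)"
proof
  note ph = phi_prop[OF assms(1) assms(3)]
  have A'A: "A' \<subseteq> A" and hd: "heads A' = V" using assms(3) unfolding pld_data_def by auto
  have AV: "A \<subseteq> V \<times> V" using assms(1) unfolding digraph_def by auto
  assume "\<exists>S. S \<noteq> {} \<and> semikernel A' (pld_arcs A A' \<phi>) S"
  then obtain S' where ne: "S' \<noteq> {}" and sk: "semikernel A' (pld_arcs A A' \<phi>) S'" by blast
  have sub: "S' \<subseteq> A'" and ind: "\<And>x y. x\<in>S' \<Longrightarrow> y\<in>S' \<Longrightarrow> (x,y) \<notin> pld_arcs A A' \<phi>"
    and ab: "\<And>s x. (s,x) \<in> pld_arcs A A' \<phi> \<Longrightarrow> s \<in> S' \<Longrightarrow> x \<notin> S' \<Longrightarrow> \<exists>s'\<in>S'. (x,s') \<in> pld_arcs A A' \<phi>"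
    using sk unfolding semikernel_def by blast+
  define S where "S = snd ` S'"
  have "S \<noteq> {}" using ne S_def by auto
  moreover have "semikernel V A S"
    unfolding semikernel_def
  proof (intro conjI allI impI ballI)
    show "S \<subseteq> V" using sub A'A AV S_def by force
  next
    fix j k assume j: "j \<in> S" and k: "k \<in> S"
    show "(j,k) \<notin> A"
    proof
      assume jk: "(j,k) \<in> A"
      obtain i where ij: "(i,j) \<in> S'" using j S_def by auto
      obtain y where yk: "(y,k) \<in> S'" using k S_def by auto
      have arc: "((i,j), \<phi>(j,k)) \<in> pld_arcs A A' \<phi>" using ij sub jk by (auto simp: pld_arcs_iff)
      have "\<phi>(j,k) \<notin> S'" using ind[OF ij] arc by blast
      then obtain s' where s': "s' \<in> S'" "(\<phi>(j,k), s') \<in> pld_arcs A A' \<phi>" using ab[OF arc ij] by blast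
      then obtain m where "(k,m) \<in> A" "s' = \<phi>(k,m)" using ph[OF jk] by (auto simp: pld_arcs_iff)
      then have "((y,k), s') \<in> pld_arcs A A' \<phi>" using yk sub by (auto simp: pld_arcs_iff)
      then show False using ind[OF yk s'(1)] by blast
    qed
  next
    fix j k assume h: "(j,k) \<in> A \<and> j \<in> S \<and> k \<notin> S"
    obtain i where ij: "(i,j) \<in> S'" using h S_def by auto
    have arc: "((i,j), \<phi>(j,k)) \<in> pld_arcs A A' \<phi>" using ij sub h by (auto simp: pld_arcs_iff)
    have "\<phi>(j,k) \<notin> S'" using ph[of j k] h S_def by force
    then obtain s' where s': "s' \<in> S'" "(\<phi>(j,k), s') \<in> pld_arcs A A' \<phi>" using ab[OF arc ij] by blast
    then obtain m where m: "(k,m) \<in> A" "s' = \<phi>(k,m)" using ph[of j k] h by (auto simp: pld_arcs_iff)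
    have "m \<in> S" using ph[OF m(1)] m s' S_def by force
    then show "\<exists>s'\<in>S. (k,s') \<in> A" using m by blast
  qed
  ultimately show "\<exists>S. S \<noteq> {} \<and> semikernel V A S" by blast
next
  note ph = phi_prop[OF assms(1) assms(3)]
  have A'A: "A' \<subseteq> A" and hd: "heads A' = V" using assms(3) unfolding pld_data_def by auto
  assume "\<exists>S. S \<noteq> {} \<and> semikernel V A S"
  then obtain S where ne: "S \<noteq> {}" and sk: "semikernel V A S" by blast
  have sub: "S \<subseteq> V" and ind: "\<And>x y. x\<in>S \<Longrightarrow> y\<in>S \<Longrightarrow> (x,y) \<notin> A"
    and ab: "\<And>s x. (s,x) \<in> A \<Longrightarrow> s \<in> S \<Longrightarrow> x \<notin> S \<Longrightarrow> \<exists>s'\<in>S. (x,s') \<in> A"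
    using sk unfolding semikernel_def by blast+
  define S' where "S' = {p \<in> A'. snd p \<in> S}"
  have "S' \<noteq> {}"
  proof -
    obtain s where "s \<in> S" using ne by auto
    then have "s \<in> heads A'" using sub hd by auto
    then obtain x where "(x,s) \<in> A'" unfolding heads_def by auto
    then show ?thesis using \<open>s \<in> S\<close> S'_def by force
  qed
  moreover have "semikernel A' (pld_arcs A A' \<phi>) S'"
    unfolding semikernel_def
  proof (intro conjI allI impI ballI)
    show "S' \<subseteq> A'" using S'_def by auto
  next
    fix p q assume p: "p \<in> S'" and q: "q \<in> S'"
    show "(p,q) \<notin> pld_arcs A A' \<phi>"
    proof
      assume "(p,q) \<in> pld_arcs A A' \<phi>"
      then obtain k where k: "(snd p,k)\<in>A" "q = \<phi>(snd p,k)" by (auto simp: pld_arcs_iff)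
      have "k \<in> S" using q k ph[OF k(1)] S'_def by auto
      moreover have "snd p \<in> S" using p S'_def by auto
      ultimately show False using ind k(1) by blast
    qed
  next
    fix p q assume h: "(p,q) \<in> pld_arcs A A' \<phi> \<and> p \<in> S' \<and> q \<notin> S'"
    then obtain k where k: "(snd p,k)\<in>A" "q = \<phi>(snd p,k)" by (auto simp: pld_arcs_iff)
    have qA: "q \<in> A'" "snd q = k" using ph[OF k(1)] k by auto
    have "k \<notin> S" using h qA S'_def by auto
    moreover have "snd p \<in> S" using h S'_def by auto
    ultimately obtain m where m: "m \<in> S" "(k,m) \<in> A" using ab k(1) by blast
    have "(q, \<phi>(k,m)) \<in> pld_arcs A A' \<phi>" using qA m by (auto simp: pld_arcs_iff)
    moreover have "\<phi>(k,m) \<in> S'" using ph[OF m(2)] m S'_def by auto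
    ultimately show "\<exists>s'\<in>S'. (q,s') \<in> pld_arcs A A' \<phi>" by blast
  qed
  ultimately show "\<exists>S. S \<noteq> {} \<and> semikernel A' (pld_arcs A A' \<phi>) S" by blast
qed

end
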